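(* Let $(f_n):\underline G=(G_n,p_n)\to\underline H=(H_n,q_n)$ be a level morphism of inverse sequences of groups such that the induced map $\tilde f:\varprojlim\underline G\to\varprojlim\underline H$, $\tilde f((g_n))=(f_n(g_n))$, is an isomorphism of groups. If $\tilde f$ is open (with respect to the inverse limit topologies, each $G_n$, $H_n$ discrete) and $\underline G$ is Mittag-Leffler, then the morphism $\underline f:\underline G\to\underline H$ of \textbf{Tower-Grp} determined by $(f_n)$ is a monomorphism in \textbf{Tower-Grp}.
   Context: A level morphism $(f_n)$ consists of homomorphisms $f_n:G_n\to H_n$ with $f_n\circ p_n=q_n\circ f_{n+1}$ for all $n$ (i.e. $\Phi=\mathrm{id}$). $p_{nm}=p_n\circ\cdots\circ p_{m-1}$; Mittag-Leffler: for every $n_0$ there is $n_1>n_0$ with $p_{n_0n}(G_n)=p_{n_0n_1}(G_{n_1})$ for all $n>n_1$. \textbf{Tower-Grp}: objects inverse sequences of groups; morphisms $(f_n,\Phi)$ with $\Phi:\mathbb{N}\to\mathbb{N}$, homomorphisms $f_n:G_{\Phi(n)}\to H_n$ such that for all $n'>n$ there is $m\ge\Phi(n),\Phi(n')$ with $f_n\circ p_{\Phi(n)m}=q_{nn'}\circ f_{n'}\circ p_{\Phi(n')m}$, modulo the relation: $(f_n,\Phi)\sim(g_n,\Psi)$ if every $n$ admits $m\ge\Phi(n),\Psi(n)$ with $f_n\circ p_{\Phi(n)m}=g_n\circ p_{\Psi(n)m}$. A monomorphism is a morphism $u$ with $u\circ a=u\circ b\Rightarrow a=b$. *)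

theory Defs
  imports "HOL-Analysis.Analysis" "HOL-Algebra.Group"
begin

definition is_tower :: "(nat \<Rightarrow> ('a, 'm) monoid_scheme) \<Rightarrow> (nat \<Rightarrow> 'a \<Rightarrow> 'a) \<Rightarrow> bool" where
  "is_tower G p \<longleftrightarrow> (\<forall>n. group (G n) \<and> p n \<in> hom (G (Suc n)) (G n))"

fun tower_map :: "(nat \<Rightarrow> 'a \<Rightarrow> 'a) \<Rightarrow> nat \<Rightarrow> nat \<Rightarrow> 'a \<Rightarrow> 'a" where
  "tower_map p n 0 = id"
| "tower_map p n (Suc k) = tower_map p n k \<circ> p (n + k)"

definition bond :: "(nat \<Rightarrow> 'a \<Rightarrow> 'a) \<Rightarrow> nat \<Rightarrow> nat \<Rightarrow> 'a \<Rightarrow> 'a" where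
  "bond p n m = tower_map p n (m - n)"

definition level_morphism ::
  "(nat \<Rightarrow> ('a, 'm) monoid_scheme) \<Rightarrow> (nat \<Rightarrow> 'a \<Rightarrow> 'a) \<Rightarrow>
   (nat \<Rightarrow> ('b, 'n) monoid_scheme) \<Rightarrow> (nat \<Rightarrow> 'b \<Rightarrow> 'b) \<Rightarrow> (nat \<Rightarrow> 'a \<Rightarrow> 'b) \<Rightarrow> bool" where
  "level_morphism G p H q f \<longleftrightarrow>
     (\<forall>n. f n \<in> hom (G n) (H n) \<and>
          (\<forall>x \<in> carrier (G (Suc n)). f n (p n x) = q n (f (Suc n) x)))"

text \<open>Morphism (f_n, Phi) of Tower-Grp (a representative).\<close>
definition tower_morph ::
  "(nat \<Rightarrow> ('a, 'm) monoid_scheme) \<Rightarrow> (nat \<Rightarrow> 'a \<Rightarrow> 'a) \<Rightarrow>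
   (nat \<Rightarrow> ('b, 'n) monoid_scheme) \<Rightarrow> (nat \<Rightarrow> 'b \<Rightarrow> 'b) \<Rightarrow>
   (nat \<Rightarrow> 'a \<Rightarrow> 'b) \<Rightarrow> (nat \<Rightarrow> nat) \<Rightarrow> bool" where
  "tower_morph G p H q f \<Phi> \<longleftrightarrow>
     (\<forall>n. f n \<in> hom (G (\<Phi> n)) (H n)) \<and>
     (\<forall>n n'. n < n' \<longrightarrow> (\<exists>m. \<Phi> n \<le> m \<and> \<Phi> n' \<le> m \<and>
        (\<forall>x \<in> carrier (G m).
           f n (bond p (\<Phi> n) m x) = bond q n n' (f n' (bond p (\<Phi> n') m x)))))"

definition tower_eq ::
  "(nat \<Rightarrow> ('a, 'm) monoid_scheme) \<Rightarrow> (nat \<Rightarrow> 'a \<Rightarrow> 'a) \<Rightarrow>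
   (nat \<Rightarrow> 'a \<Rightarrow> 'b) \<Rightarrow> (nat \<Rightarrow> nat) \<Rightarrow> (nat \<Rightarrow> 'a \<Rightarrow> 'b) \<Rightarrow> (nat \<Rightarrow> nat) \<Rightarrow> bool" where
  "tower_eq G p f \<Phi> g \<Psi> \<longleftrightarrow>
     (\<forall>n. \<exists>m. \<Phi> n \<le> m \<and> \<Psi> n \<le> m \<and>
        (\<forall>x \<in> carrier (G m). f n (bond p (\<Phi> n) m x) = g n (bond p (\<Psi> n) m x)))"

definition tower_comp_maps :: "(nat \<Rightarrow> 'b \<Rightarrow> 'c) \<Rightarrow> (nat \<Rightarrow> nat) \<Rightarrow> (nat \<Rightarrow> 'a \<Rightarrow> 'b) \<Rightarrow> nat \<Rightarrow> 'a \<Rightarrow> 'c" where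
  "tower_comp_maps f \<Phi> a = (\<lambda>n. f n \<circ> a (\<Phi> n))"

definition tower_comp_index :: "(nat \<Rightarrow> nat) \<Rightarrow> (nat \<Rightarrow> nat) \<Rightarrow> nat \<Rightarrow> nat" where
  "tower_comp_index \<Phi> \<alpha> = \<alpha> \<circ> \<Phi>"

text \<open>(f,Phi) : (G,p) \<rightarrow> (H,q) is a monomorphism in Tower-Grp, tested against
  all towers whose groups have elements in the type 'c (the theorem quantifies
  over the type 'c, hence over all test towers).\<close>
definition tower_mono ::
  "'c itself \<Rightarrow> (nat \<Rightarrow> ('a, 'm) monoid_scheme) \<Rightarrow> (nat \<Rightarrow> 'a \<Rightarrow> 'a) \<Rightarrow>
   (nat \<Rightarrow> ('b, 'n) monoid_scheme) \<Rightarrow> (nat \<Rightarrow> 'b \<Rightarrow> 'b) \<Rightarrow>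
   (nat \<Rightarrow> 'a \<Rightarrow> 'b) \<Rightarrow> (nat \<Rightarrow> nat) \<Rightarrow> bool" where
  "tower_mono (_ :: 'c itself) G p H q f \<Phi> \<longleftrightarrow>
     (\<forall>(A :: nat \<Rightarrow> 'c monoid) r a \<alpha> b \<beta>.
        is_tower A r \<longrightarrow> tower_morph A r G p a \<alpha> \<longrightarrow> tower_morph A r G p b \<beta> \<longrightarrow>
        tower_eq A r (tower_comp_maps f \<Phi> a) (tower_comp_index \<Phi> \<alpha>)
                     (tower_comp_maps f \<Phi> b) (tower_comp_index \<Phi> \<beta>) \<longrightarrow>
        tower_eq A r a \<alpha> b \<beta>)"

definition mittag_leffler :: "(nat \<Rightarrow> ('a, 'm) monoid_scheme) \<Rightarrow> (nat \<Rightarrow> 'a \<Rightarrow> 'a) \<Rightarrow> bool" where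
  "mittag_leffler G p \<longleftrightarrow>
     (\<forall>n0. \<exists>n1>n0. \<forall>n>n1. bond p n0 n ` carrier (G n) = bond p n0 n1 ` carrier (G n1))"

definition inv_lim_carrier :: "(nat \<Rightarrow> ('a, 'm) monoid_scheme) \<Rightarrow> (nat \<Rightarrow> 'a \<Rightarrow> 'a) \<Rightarrow> (nat \<Rightarrow> 'a) set" where
  "inv_lim_carrier G p = {g. (\<forall>n. g n \<in> carrier (G n)) \<and> (\<forall>n. p n (g (Suc n)) = g n)}"

definition inv_lim :: "(nat \<Rightarrow> ('a, 'm) monoid_scheme) \<Rightarrow> (nat \<Rightarrow> 'a \<Rightarrow> 'a) \<Rightarrow> (nat \<Rightarrow> 'a) monoid" where
  "inv_lim G p = \<lparr>carrier = inv_lim_carrier G p,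
                  mult = (\<lambda>g h n. g n \<otimes>\<^bsub>G n\<^esub> h n),
                  one = (\<lambda>n. \<one>\<^bsub>G n\<^esub>)\<rparr>"

definition inv_lim_topology :: "(nat \<Rightarrow> ('a, 'm) monoid_scheme) \<Rightarrow> (nat \<Rightarrow> 'a \<Rightarrow> 'a) \<Rightarrow> (nat \<Rightarrow> 'a) topology" where
  "inv_lim_topology G p =
     subtopology (product_topology (\<lambda>n. discrete_topology (carrier (G n))) UNIV) (inv_lim_carrier G p)"

definition induced_map :: "(nat \<Rightarrow> 'a \<Rightarrow> 'b) \<Rightarrow> (nat \<Rightarrow> 'a) \<Rightarrow> (nat \<Rightarrow> 'b)" where
  "induced_map f g = (\<lambda>n. f n (g n))"

end

theory Submission
  imports Defs
begin

lemma tower_map_Suc_left: "tower_map p n (Suc k) = p n \<circ> tower_map p (Suc n) k"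
proof (induction k)
  case 0 then show ?case by simp
next
  case (Suc k)
  have "tower_map p n (Suc (Suc k)) = tower_map p n (Suc k) \<circ> p (n + Suc k)"
    by (simp only: tower_map.simps)
  also have "\<dots> = p n \<circ> (tower_map p (Suc n) k \<circ> p (Suc n + k))"
    by (simp only: Suc o_assoc add_Suc_right add_Suc)
  also have "\<dots> = p n \<circ> tower_map p (Suc n) (Suc k)"
    by (simp only: tower_map.simps)
  finally show ?case .
qed

lemma tower_map_add: "tower_map p n (i + j) = tower_map p n i \<circ> tower_map p (n + i) j"
proof (induction j)
  case 0 then show ?case by simp
next
  case (Suc j)
  have "tower_map p n (i + Suc j) = tower_map p n (i + j) \<circ> p (n + (i + j))"
    by (simp only: tower_map.simps add_Suc_right)
  also have "\<dots> = tower_map p n i \<circ> (tower_map p (n + i) j \<circ> p (n + i + j))"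
    by (simp only: Suc o_assoc add.assoc)
  also have "\<dots> = tower_map p n i \<circ> tower_map p (n + i) (Suc j)"
    by (simp only: tower_map.simps)
  finally show ?case .
qed

lemma bond_refl[simp]: "bond p n n = id"
  by (simp add: bond_def)

lemma bond_Suc: "n < m \<Longrightarrow> bond p n m x = p n (bond p (Suc n) m x)"
proof -
  assume "n < m"
  then have "m - n = Suc (m - Suc n)" by simp
  then show ?thesis unfolding bond_def by (simp only: tower_map_Suc_left o_apply)
qed

lemma bond_comp: "a \<le> b \<Longrightarrow> b \<le> c \<Longrightarrow> bond p a b (bond p b c x) = bond p a c x"
proof -
  assume "a \<le> b" "b \<le> c"
  then have e: "c - a = (b - a) + (c - b)" "a + (b - a) = b" by simp_all
  show ?thesis unfolding bond_def e(1) tower_map_add e(2) by simp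
qed

lemma tower_map_hom: "is_tower G p \<Longrightarrow> tower_map p n k \<in> hom (G (n + k)) (G n)"
proof (induction k)
  case 0
  then show ?case by (auto intro!: homI)
next
  case (Suc k)
  have "p (n + k) \<in> hom (G (n + Suc k)) (G (n + k))"
    using Suc.prems by (simp add: is_tower_def)
  then have "tower_map p n k \<circ> p (n + k) \<in> hom (G (n + Suc k)) (G n)"
    using Suc hom_compose by fastforce
  then show ?case by (simp only: tower_map.simps)
qed

lemma bond_hom: "is_tower G p \<Longrightarrow> n \<le> m \<Longrightarrow> bond p n m \<in> hom (G m) (G n)"
  using tower_map_hom[of G p n "m - n"] by (simp add: bond_def)

lemma thread_bond: "g \<in> inv_lim_carrier G p \<Longrightarrow> n \<le> m \<Longrightarrow> bond p n m (g m) = g n"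
proof (induction m)
  case 0 then show ?case by simp
next
  case (Suc m)
  show ?case
  proof (cases "n = Suc m")
    case False
    then have "n \<le> m" using Suc by simp
    then have "bond p n (Suc m) (g (Suc m)) = bond p n m (bond p m (Suc m) (g (Suc m)))"
      by (simp add: bond_comp)
    also have "bond p m (Suc m) (g (Suc m)) = g m"
      using Suc.prems bond_Suc[of m "Suc m" p] by (simp add: inv_lim_carrier_def)
    finally show ?thesis using Suc \<open>n \<le> m\<close> by simp
  qed simp
qed

lemma ml_lift:
  assumes tower: "is_tower G p" and ml: "mittag_leffler G p"
  shows "\<exists>k'\<ge>k. \<forall>y \<in> bond p k k' ` carrier (G k'). \<exists>g \<in> inv_lim_carrier G p. g k = y"
proof -
  obtain s where s: "\<And>n0. s n0 > n0"
    "\<And>n0 n. n > s n0 \<Longrightarrow> bond p n0 n ` carrier (G n) = bond p n0 (s n0) ` carrier (G (s n0))"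
    using ml unfolding mittag_leffler_def by metis
  define Im where "Im n = bond p n (s n) ` carrier (G (s n))" for n
  have stab: "bond p n0 n ` carrier (G n) = Im n0" if "n \<ge> s n0" for n0 n
    using s(2)[of n0 n] that unfolding Im_def by (cases "n = s n0") auto
  have Im_sub: "Im n \<subseteq> carrier (G n)" for n
    unfolding Im_def using bond_hom[OF tower, of n "s n"] s(1)[of n] hom_carrier by fastforce
  have surj: "\<exists>w \<in> Im (Suc n). p n w = z" if "z \<in> Im n" for n z
  proof -
    define m where "m = s n + s (Suc n)"
    have "m \<ge> s n" "m \<ge> s (Suc n)" unfolding m_def by auto
    then have "z \<in> bond p n m ` carrier (G m)" using stab that by auto
    then obtain x where x: "x \<in> carrier (G m)" "z = bond p n m x" by auto
    have "n < m" using s(1)[of n] \<open>m \<ge> s n\<close> by simp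
    then have "z = p n (bond p (Suc n) m x)" using x bond_Suc by metis
    moreover have "bond p (Suc n) m x \<in> Im (Suc n)"
      using stab[OF \<open>m \<ge> s (Suc n)\<close>] x by auto
    ultimately show ?thesis by auto
  qed
  define nxt where "nxt n z = (SOME w. w \<in> Im (Suc n) \<and> p n w = z)" for n z
  have nxt: "nxt n z \<in> Im (Suc n) \<and> p n (nxt n z) = z" if "z \<in> Im n" for n z
  proof -
    have "\<exists>w. w \<in> Im (Suc n) \<and> p n w = z" using surj[OF that] by blast
    then show ?thesis unfolding nxt_def by (rule someI_ex)
  qed
  show ?thesis
  proof (intro exI[of _ "s k"] conjI ballI)
    show "s k \<ge> k" using s(1)[of k] by simp
    fix y assume "y \<in> bond p k (s k) ` carrier (G (s k))"
    then have y: "y \<in> Im k" unfolding Im_def .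
    define x where "x = rec_nat y (\<lambda>i z. nxt (k + i) z)"
    have x0: "x 0 = y" and xS: "x (Suc i) = nxt (k + i) (x i)" for i
      unfolding x_def by simp_all
    have xi: "x i \<in> Im (k + i)" for i
    proof (induction i)
      case 0 then show ?case using y x0 by simp
    next
      case (Suc i) then show ?case using nxt xS by (metis add_Suc_right)
    qed
    have xstep: "p (k + i) (x (Suc i)) = x i" for i
      using nxt[OF xi[of i]] xS by simp
    define g where "g j = (if j \<le> k then bond p j k y else x (j - k))" for j
    have yc: "y \<in> carrier (G k)" using y Im_sub by auto
    have "g \<in> inv_lim_carrier G p"
      unfolding inv_lim_carrier_def
    proof (intro CollectI conjI allI)
      fix j
      show "g j \<in> carrier (G j)"
      proof (cases "j \<le> k")
        case True then show ?thesis
          using bond_hom[OF tower True] yc hom_in_carrier unfolding g_def by fastforce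
      next
        case False then show ?thesis using xi[of "j - k"] Im_sub unfolding g_def by auto
      qed
      show "p j (g (Suc j)) = g j"
      proof (cases "Suc j \<le> k")
        case True then show ?thesis unfolding g_def using bond_Suc[of j k p y] by simp
      next
        case False
        then have "Suc j - k = Suc (j - k)" "k + (j - k) = j" by auto
        then have "p j (x (Suc j - k)) = x (j - k)" using xstep[of "j - k"] by simp
        then show ?thesis using False x0 unfolding g_def by (cases "j = k") auto
      qed
    qed
    moreover have "g k = y" unfolding g_def by simp
    ultimately show "\<exists>g \<in> inv_lim_carrier G p. g k = y" by auto
  qed
qed

lemma carrier_inv_lim[simp]: "carrier (inv_lim G p) = inv_lim_carrier G p"
  by (simp add: inv_lim_def)

lemma top_step:
  assumes tG: "is_tower G p" and tH: "is_tower H q"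
    and lm: "level_morphism G p H q f"
    and iso: "induced_map f \<in> iso (inv_lim G p) (inv_lim H q)"
    and op: "open_map (inv_lim_topology G p) (inv_lim_topology H q) (induced_map f)"
  shows "\<exists>k\<ge>n. \<forall>g \<in> inv_lim_carrier G p. f k (g k) = \<one>\<^bsub>H k\<^esub> \<longrightarrow> g n = \<one>\<^bsub>G n\<^esub>"
proof -
  define F where "F = induced_map f"
  define PG where "PG = product_topology (\<lambda>n. discrete_topology (carrier (G n))) UNIV"
  define PH where "PH = product_topology (\<lambda>n. discrete_topology (carrier (H n))) UNIV"
  have grG: "group (G j)" and grH: "group (H j)" for j using tG tH by (auto simp: is_tower_def)
  have oneG: "\<one>\<^bsub>G j\<^esub> \<in> carrier (G j)" for j
    by (rule monoid.one_closed[OF group.is_monoid[OF grG]])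
  have fhom: "f j \<in> hom (G j) (H j)" for j using lm by (simp add: level_morphism_def)
  have f1: "f j \<one>\<^bsub>G j\<^esub> = \<one>\<^bsub>H j\<^esub>" for j using hom_one[OF fhom grG grH] .
  define T where "T = {g \<in> topspace PG. g n \<in> {\<one>\<^bsub>G n\<^esub>}}"
  have "openin PG T" unfolding T_def PG_def
    by (rule openin_continuous_map_preimage[OF continuous_map_product_projection])
      (simp_all add: oneG)
  define U where "U = T \<inter> inv_lim_carrier G p"
  have "openin (inv_lim_topology G p) U"
    unfolding inv_lim_topology_def openin_subtopology U_def
    using \<open>openin PG T\<close> PG_def by blast
  then have "openin (inv_lim_topology H q) (F ` U)"
    using op unfolding open_map_def F_def by blast
  then obtain W where W: "openin PH W" "F ` U = W \<inter> inv_lim_carrier H q"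
    unfolding inv_lim_topology_def openin_subtopology PH_def by blast
  define eG where "eG = (\<lambda>j. \<one>\<^bsub>G j\<^esub>)"
  define eH where "eH = (\<lambda>j. \<one>\<^bsub>H j\<^esub>)"
  have pone: "p j \<one>\<^bsub>G (Suc j)\<^esub> = \<one>\<^bsub>G j\<^esub>" for j
    using hom_one[of "p j" "G (Suc j)" "G j"] tG grG by (simp add: is_tower_def)
  have "eG \<in> U" unfolding U_def T_def PG_def eG_def inv_lim_carrier_def
    by (simp add: oneG pone PiE_iff)
  then have "F eG \<in> F ` U" by blast
  moreover have "F eG = eH" unfolding F_def eG_def eH_def induced_map_def using f1 by simp
  ultimately have "eH \<in> W" using W by auto
  then obtain V where V: "finite {i \<in> UNIV. V i \<noteq> topspace (discrete_topology (carrier (H i)))}"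
    "eH \<in> Pi\<^sub>E UNIV V" "Pi\<^sub>E UNIV V \<subseteq> W"
    using W(1) unfolding PH_def openin_product_topology_alt by blast
  define J where "J = {i. V i \<noteq> carrier (H i)}"
  have "finite J" using V(1) unfolding J_def by simp
  then obtain m where m: "\<And>j. j \<in> J \<Longrightarrow> j \<le> m"
    using finite_nat_set_iff_bounded_le by metis
  define k where "k = max n m"
  have inj: "inj_on F (inv_lim_carrier G p)" and Fhom: "F \<in> hom (inv_lim G p) (inv_lim H q)"
    using iso_iff[THEN iffD1, OF iso] unfolding F_def by (simp_all only: carrier_inv_lim)
  show ?thesis
  proof (intro exI[of _ k] conjI ballI impI)
    show "k \<ge> n" unfolding k_def by simp
    fix g assume g: "g \<in> inv_lim_carrier G p" and gk: "f k (g k) = \<one>\<^bsub>H k\<^esub>"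
    have h: "F g \<in> inv_lim_carrier H q" using hom_in_carrier[OF Fhom] g by simp
    have hk: "F g k = \<one>\<^bsub>H k\<^esub>" using gk unfolding F_def induced_map_def .
    have hj: "F g j = \<one>\<^bsub>H j\<^esub>" if "j \<le> k" for j
    proof -
      have "F g j = bond q j k (F g k)" using thread_bond[OF h that] by simp
      also have "\<dots> = \<one>\<^bsub>H j\<^esub>" using hk hom_one[OF bond_hom[OF tH that] grH grH] by simp
      finally show ?thesis .
    qed
    have "F g \<in> Pi\<^sub>E UNIV V"
    proof (simp add: PiE_iff, intro allI)
      fix j
      show "F g j \<in> V j"
      proof (cases "j \<in> J")
        case True
        then have "j \<le> k" using m[OF True] unfolding k_def by simp
        then show ?thesis using hj V(2) unfolding eH_def by (auto simp: PiE_iff)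
      next
        case False
        then show ?thesis using h unfolding J_def inv_lim_carrier_def by auto
      qed
    qed
    then have "F g \<in> F ` U" using V(3) W(2) h by auto
    then obtain g' where g': "g' \<in> U" "F g = F g'" by auto
    then have "g = g'" using inj g unfolding U_def by (auto dest: inj_onD)
    then show "g n = \<one>\<^bsub>G n\<^esub>" using g' unfolding U_def T_def by simp
  qed
qed

lemma tm_le:
  assumes "tower_morph A r G p a \<alpha>" "n \<le> n'"
  shows "\<exists>m. \<alpha> n \<le> m \<and> \<alpha> n' \<le> m \<and>
    (\<forall>x\<in>carrier (A m). a n (bond r (\<alpha> n) m x) = bond p n n' (a n' (bond r (\<alpha> n') m x)))"
proof (cases "n = n'")
  case True then show ?thesis by (intro exI[of _ "\<alpha> n"]) simp
next
  case False then show ?thesis using assms unfolding tower_morph_def by simp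
qed

lemma mk_group_hom: "group G \<Longrightarrow> group H \<Longrightarrow> h \<in> hom G H \<Longrightarrow> group_hom G H h"
  by (simp add: group_hom_def group_hom_axioms_def)

lemma group_eq_of_inv_mult:
  fixes G (structure)
  assumes "group G" "x \<in> carrier G" "y \<in> carrier G" "inv\<^bsub>G\<^esub> x \<otimes>\<^bsub>G\<^esub> y = \<one>\<^bsub>G\<^esub>"
  shows "x = y"
proof -
  interpret group G by fact
  have "x \<otimes> (inv x \<otimes> y) = x" using assms(2,4) by simp
  moreover have "x \<otimes> (inv x \<otimes> y) = y" using assms(2,3) by (simp add: m_assoc[symmetric])
  ultimately show ?thesis by simp
qed

theorem proposition8p13:
  fixes G :: "nat \<Rightarrow> ('a, 'm) monoid_scheme" and p :: "nat \<Rightarrow> 'a \<Rightarrow> 'a"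
    and H :: "nat \<Rightarrow> ('b, 'n) monoid_scheme" and q :: "nat \<Rightarrow> 'b \<Rightarrow> 'b"
    and f :: "nat \<Rightarrow> 'a \<Rightarrow> 'b"
  assumes "is_tower G p" and "is_tower H q"
    and "level_morphism G p H q f"
    and "induced_map f \<in> iso (inv_lim G p) (inv_lim H q)"
    and "open_map (inv_lim_topology G p) (inv_lim_topology H q) (induced_map f)"
    and "mittag_leffler G p"
  shows "tower_mono TYPE('c) G p H q f id"
  unfolding tower_mono_def
proof (intro allI impI)
  note tG = assms(1) and tH = assms(2) and lm = assms(3)
  have grG: "group (G j)" and grH: "group (H j)" for j using tG tH by (auto simp: is_tower_def)
  have fhom: "f j \<in> hom (G j) (H j)" for j using lm by (simp add: level_morphism_def)
  fix A :: "nat \<Rightarrow> 'c monoid" and r a \<alpha> b \<beta>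
  assume tA: "is_tower A r" and ma: "tower_morph A r G p a \<alpha>" and mb: "tower_morph A r G p b \<beta>"
    and eq: "tower_eq A r (tower_comp_maps f id a) (tower_comp_index id \<alpha>)
                     (tower_comp_maps f id b) (tower_comp_index id \<beta>)"
  have ahom: "a j \<in> hom (A (\<alpha> j)) (G j)" and bhom: "b j \<in> hom (A (\<beta> j)) (G j)" for j
    using ma mb unfolding tower_morph_def by auto
  have bondA: "bond r i j x \<in> carrier (A i)" if "i \<le> j" "x \<in> carrier (A j)" for i j x
    using hom_in_carrier[OF bond_hom[OF tA that(1)] that(2)] .
  show "tower_eq A r a \<alpha> b \<beta>"
    unfolding tower_eq_def
  proof
    fix n
    obtain k where k: "k \<ge> n" "\<And>g. g \<in> inv_lim_carrier G p \<Longrightarrow> f k (g k) = \<one>\<^bsub>H k\<^esub> \<Longrightarrow> g n = \<one>\<^bsub>G n\<^esub>"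
      using top_step[OF assms(1-5), of n] by blast
    obtain k' where k': "k' \<ge> k" "\<And>y. y \<in> bond p k k' ` carrier (G k') \<Longrightarrow> \<exists>g \<in> inv_lim_carrier G p. g k = y"
      using ml_lift[OF tG assms(6), of k] by blast
    obtain m1 where m1: "\<alpha> k \<le> m1" "\<beta> k \<le> m1"
      "\<And>x. x \<in> carrier (A m1) \<Longrightarrow> f k (a k (bond r (\<alpha> k) m1 x)) = f k (b k (bond r (\<beta> k) m1 x))"
      using eq[unfolded tower_eq_def tower_comp_maps_def tower_comp_index_def, rule_format, of k] by auto
    obtain m2 where m2: "\<alpha> n \<le> m2" "\<alpha> k \<le> m2"
      "\<And>x. x \<in> carrier (A m2) \<Longrightarrow> a n (bond r (\<alpha> n) m2 x) = bond p n k (a k (bond r (\<alpha> k) m2 x))"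
      using tm_le[OF ma k(1)] by blast
    obtain m3 where m3: "\<beta> n \<le> m3" "\<beta> k \<le> m3"
      "\<And>x. x \<in> carrier (A m3) \<Longrightarrow> b n (bond r (\<beta> n) m3 x) = bond p n k (b k (bond r (\<beta> k) m3 x))"
      using tm_le[OF mb k(1)] by blast
    obtain m4 where m4: "\<alpha> k \<le> m4" "\<alpha> k' \<le> m4"
      "\<And>x. x \<in> carrier (A m4) \<Longrightarrow> a k (bond r (\<alpha> k) m4 x) = bond p k k' (a k' (bond r (\<alpha> k') m4 x))"
      using tm_le[OF ma k'(1)] by blast
    obtain m5 where m5: "\<beta> k \<le> m5" "\<beta> k' \<le> m5"
      "\<And>x. x \<in> carrier (A m5) \<Longrightarrow> b k (bond r (\<beta> k) m5 x) = bond p k k' (b k' (bond r (\<beta> k') m5 x))"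
      using tm_le[OF mb k'(1)] by blast
    define m where "m = m1 + m2 + m3 + m4 + m5"
    have le: "m1 \<le> m" "m2 \<le> m" "m3 \<le> m" "m4 \<le> m" "m5 \<le> m" unfolding m_def by auto
    show "\<exists>m. \<alpha> n \<le> m \<and> \<beta> n \<le> m \<and>
        (\<forall>x \<in> carrier (A m). a n (bond r (\<alpha> n) m x) = b n (bond r (\<beta> n) m x))"
    proof (intro exI[of _ m] conjI ballI)
      show "\<alpha> n \<le> m" using m2(1) le(2) by simp
      show "\<beta> n \<le> m" using m3(1) le(3) by simp
      fix x assume x: "x \<in> carrier (A m)"
      have xi: "bond r mi m x \<in> carrier (A mi)" if "mi \<le> m" for mi using bondA[OF that x] .
      have bc: "bond r i mi (bond r mi m x) = bond r i m x" if "i \<le> mi" "mi \<le> m" for i mi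
        using bond_comp[OF that] .
      define u where "u = a k (bond r (\<alpha> k) m x)"
      define v where "v = b k (bond r (\<beta> k) m x)"
      define u' where "u' = a k' (bond r (\<alpha> k') m x)"
      define v' where "v' = b k' (bond r (\<beta> k') m x)"
      have fuv: "f k u = f k v" using m1(3)[OF xi[OF le(1)]] bc[OF m1(1) le(1)] bc[OF m1(2) le(1)]
        unfolding u_def v_def by simp
      have an: "a n (bond r (\<alpha> n) m x) = bond p n k u"
        using m2(3)[OF xi[OF le(2)]] bc[OF m2(1) le(2)] bc[OF m2(2) le(2)] unfolding u_def by simp
      have bn: "b n (bond r (\<beta> n) m x) = bond p n k v"
        using m3(3)[OF xi[OF le(3)]] bc[OF m3(1) le(3)] bc[OF m3(2) le(3)] unfolding v_def by simp
      have uu: "u = bond p k k' u'"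
        using m4(3)[OF xi[OF le(4)]] bc[OF m4(1) le(4)] bc[OF m4(2) le(4)] unfolding u_def u'_def by simp
      have vv: "v = bond p k k' v'"
        using m5(3)[OF xi[OF le(5)]] bc[OF m5(1) le(5)] bc[OF m5(2) le(5)] unfolding v_def v'_def by simp
      have u'c: "u' \<in> carrier (G k')" unfolding u'_def
        using hom_in_carrier[OF ahom bondA[OF _ x]] m4(2) le(4) by simp
      have v'c: "v' \<in> carrier (G k')" unfolding v'_def
        using hom_in_carrier[OF bhom bondA[OF _ x]] m5(2) le(5) by simp
      have uc: "u \<in> carrier (G k)" unfolding u_def
        using hom_in_carrier[OF ahom bondA[OF _ x]] m1(1) le(1) by simp
      have vc: "v \<in> carrier (G k)" unfolding v_def
        using hom_in_carrier[OF bhom bondA[OF _ x]] m1(2) le(1) by simp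
      interpret Bk: group_hom "G k'" "G k" "bond p k k'"
        using mk_group_hom[OF grG grG bond_hom[OF tG k'(1)]] .
      interpret Bn: group_hom "G k" "G n" "bond p n k"
        using mk_group_hom[OF grG grG bond_hom[OF tG k(1)]] .
      interpret Fk: group_hom "G k" "H k" "f k"
        using mk_group_hom[OF grG grH fhom] .
      define d where "d = inv\<^bsub>G k\<^esub> u \<otimes>\<^bsub>G k\<^esub> v"
      have "d = bond p k k' (inv\<^bsub>G k'\<^esub> u' \<otimes>\<^bsub>G k'\<^esub> v')"
        unfolding d_def uu vv using u'c v'c by simp
      moreover have "inv\<^bsub>G k'\<^esub> u' \<otimes>\<^bsub>G k'\<^esub> v' \<in> carrier (G k')" using u'c v'c by simp
      ultimately obtain g where g: "g \<in> inv_lim_carrier G p" "g k = d" using k'(2) by blast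
      have "f k d = \<one>\<^bsub>H k\<^esub>" unfolding d_def using uc vc fuv by simp
      then have "g n = \<one>\<^bsub>G n\<^esub>" using k(2)[OF g(1)] g(2) by simp
      moreover have "g n = bond p n k d" using thread_bond[OF g(1) k(1)] g(2) by simp
      ultimately have "inv\<^bsub>G n\<^esub> (bond p n k u) \<otimes>\<^bsub>G n\<^esub> bond p n k v = \<one>\<^bsub>G n\<^esub>"
        unfolding d_def using uc vc by simp
      then have "bond p n k u = bond p n k v"
        using uc vc by (metis group_eq_of_inv_mult grG Bn.hom_closed)
      then show "a n (bond r (\<alpha> n) m x) = b n (bond r (\<beta> n) m x)" using an bn by simp
    qed
  qed
qed

end
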